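(* Let $A\in\mathbb{C}^{n\times n}$ be Hermitian, $f(x)=\frac12\|xx^*-A\|_F^2$ with $\nabla f(x)=2(xx^*-A)x$, and $0<c_1<c_2<1/2$. Consider the Fletcher–Reeves conjugate gradient iteration: $x_0\in\mathbb{C}^{n\times p}_*$, $\eta_0=-\nabla f(x_0)$, $x_{k+1}=x_k+\alpha_k\eta_k$, $\eta_{k+1}=-\nabla f(x_{k+1})+\beta_{k+1}\eta_k$ with $\beta_{k+1}=\|\nabla f(x_{k+1})\|_F^2/\|\nabla f(x_k)\|_F^2$, where every $\alpha_k>0$ satisfies the strong Wolfe conditions $$f(x_k+\alpha_k\eta_k)\le f(x_k)+c_1\alpha_k\langle\nabla f(x_k),\eta_k\rangle,\qquad |\langle\nabla f(x_k+\alpha_k\eta_k),\eta_k\rangle|\le c_2|\langle\nabla f(x_k),\eta_k\rangle|,$$ and all iterates lie in $\mathbb{C}^{n\times p}_*$. If $\nabla f(x_k)\ne0$ for all $k$, then $$\liminf_{k\to\infty}\|\nabla f(x_k)\|_F=0.$$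
   Context: $\mathbb{C}^{n\times p}_*=\{X\in\mathbb{C}^{n\times p}:\operatorname{rank}X=p\}$; $\mathbb{C}^{n\times p}$ is a real vector space with inner product $\langle U,V\rangle=\Re\operatorname{tr}(U^*V)$ and induced norm $\|\cdot\|_F$. (The paper states this for the equivalent Riemannian Fletcher–Reeves CG on the quotient manifold $\mathbb{C}^{n\times p}_*/\mathcal O_p$ with metric $\Re\operatorname{tr}(U^*V)$, retraction $x\mapsto x+\tau\eta$, and differentiated-retraction vector transport; in horizontal-lift coordinates it is the iteration above.) *)

theory Defs
  imports "HOL-Analysis.Analysis"
begin

definition cadj :: "complex^'p^'n \<Rightarrow> complex^'n^'p" where
  "cadj X = (\<chi> i j. cnj (X $ j $ i))"

definition frob_inner :: "complex^'p^'n \<Rightarrow> complex^'p^'n \<Rightarrow> real" where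
  "frob_inner U V = Re (\<Sum>i\<in>UNIV. \<Sum>j\<in>UNIV. cnj (U $ i $ j) * V $ i $ j)"

definition frob_norm :: "complex^'p^'n \<Rightarrow> real" where
  "frob_norm U = sqrt (frob_inner U U)"

definition cost :: "complex^'n^'n \<Rightarrow> complex^'p^'n \<Rightarrow> real" where
  "cost A X = (1/2) * (frob_norm (X ** cadj X - A))\<^sup>2"

definition grad :: "complex^'n^'n \<Rightarrow> complex^'p^'n \<Rightarrow> complex^'p^'n" where
  "grad A X = 2 *\<^sub>R ((X ** cadj X - A) ** X)"

end

theory Submission imports Defs begin

lemma frob_inner_eq: "frob_inner U V = inner U V"
  unfolding frob_inner_def inner_vec_def
  by (simp add: Re_sum inner_complex_def)

lemma frob_norm_eq: "frob_norm U = norm U"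
  unfolding frob_norm_def frob_inner_eq by (simp add: norm_eq_sqrt_inner)

lemma norm_sq_mat: "(norm (X::complex^'p^'n))\<^sup>2 = (\<Sum>i\<in>UNIV. \<Sum>j\<in>UNIV. (cmod (X$i$j))\<^sup>2)"
  by (simp add: norm_vec_def L2_set_def sum_nonneg)

lemma cadj_norm: "norm (cadj X) = norm X"
proof -
  have "(norm (cadj X))\<^sup>2 = (norm X)\<^sup>2"
    unfolding norm_sq_mat cadj_def by (simp, subst sum.swap, simp)
  thus ?thesis by (simp add: power2_eq_iff_nonneg)
qed

lemma cadj_diff: "cadj (X - Y) = cadj X - cadj Y"
  unfolding cadj_def by (simp add: vec_eq_iff)

lemma cs_sum: "(cmod (\<Sum>k\<in>UNIV. (a k::complex) * b k))\<^sup>2 \<le> (\<Sum>k\<in>(UNIV::'m::finite set). (cmod (a k))\<^sup>2) * (\<Sum>k\<in>UNIV. (cmod (b k))\<^sup>2)"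
proof -
  define u :: "real^'m" where "u = (\<chi> k. cmod (a k))"
  define v :: "real^'m" where "v = (\<chi> k. cmod (b k))"
  have "cmod (\<Sum>k\<in>UNIV. a k * b k) \<le> (\<Sum>k\<in>UNIV. cmod (a k) * cmod (b k))"
    using norm_sum[of "\<lambda>k. a k * b k" UNIV] by (simp add: norm_mult)
  also have "\<dots> = inner u v" by (simp add: u_def v_def inner_vec_def)
  also have "\<dots> \<le> norm u * norm v" by (rule norm_cauchy_schwarz)
  finally have h: "cmod (\<Sum>k\<in>UNIV. a k * b k) \<le> norm u * norm v" .
  have "(cmod (\<Sum>k\<in>UNIV. a k * b k))\<^sup>2 \<le> (norm u * norm v)\<^sup>2"
    using h by (simp add: power_mono)
  also have "\<dots> = (norm u)\<^sup>2 * (norm v)\<^sup>2" by (simp add: power_mult_distrib)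
  also have "(norm u)\<^sup>2 = (\<Sum>k\<in>UNIV. (cmod (a k))\<^sup>2)"
    by (simp add: u_def norm_vec_def L2_set_def sum_nonneg)
  also have "(norm v)\<^sup>2 = (\<Sum>k\<in>UNIV. (cmod (b k))\<^sup>2)"
    by (simp add: v_def norm_vec_def L2_set_def sum_nonneg)
  finally show ?thesis .
qed

lemma norm_mmult: "norm ((X::complex^'m^'n) ** (Y::complex^'p^'m)) \<le> norm X * norm Y"
proof -
  have "(norm (X ** Y))\<^sup>2 = (\<Sum>i\<in>UNIV. \<Sum>j\<in>UNIV. (cmod (\<Sum>k\<in>UNIV. X$i$k * Y$k$j))\<^sup>2)"
    unfolding norm_sq_mat by (simp add: matrix_matrix_mult_def)
  also have "\<dots> \<le> (\<Sum>i\<in>UNIV. \<Sum>j\<in>UNIV. (\<Sum>k\<in>UNIV. (cmod (X$i$k))\<^sup>2) * (\<Sum>k\<in>UNIV. (cmod (Y$k$j))\<^sup>2))"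
    by (intro sum_mono cs_sum)
  also have "\<dots> = (\<Sum>i\<in>UNIV. \<Sum>k\<in>UNIV. (cmod (X$i$k))\<^sup>2) * (\<Sum>j\<in>UNIV. \<Sum>k\<in>UNIV. (cmod (Y$k$j))\<^sup>2)"
    by (rule sum_product[symmetric])
  also have "(\<Sum>j\<in>UNIV. \<Sum>k\<in>UNIV. (cmod (Y$k$j))\<^sup>2) = (norm Y)\<^sup>2"
    unfolding norm_sq_mat by (rule sum.swap)
  also have "(\<Sum>i\<in>UNIV. \<Sum>k\<in>UNIV. (cmod (X$i$k))\<^sup>2) = (norm X)\<^sup>2"
    unfolding norm_sq_mat by simp
  finally have "(norm (X ** Y))\<^sup>2 \<le> (norm X * norm Y)\<^sup>2" by (simp add: power_mult_distrib)
  thus ?thesis by (rule power2_le_imp_le) simp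
qed

lemma mm_diff_l: "(A::'a::ring_1^'m^'n) ** (B - C) = A ** B - A ** C"
  by (vector matrix_matrix_mult_def sum_subtractf right_diff_distrib)
lemma mm_diff_r: "((B::'a::ring_1^'m^'n) - C) ** A = B ** A - C ** A"
  by (vector matrix_matrix_mult_def sum_subtractf left_diff_distrib)

lemma cubic_id: fixes x y :: "complex^'p^'n"
  shows "(x ** cadj x - A) ** x - (y ** cadj y - A) ** y
   = x ** (cadj x ** (x - y)) + x ** (cadj (x - y) ** y) + (x - y) ** (cadj y ** y) - A ** (x - y)"
proof -
  have e1: "x ** (cadj x ** (x - y)) = x ** cadj x ** x - x ** cadj x ** y"
    by (simp only: mm_diff_l matrix_mul_assoc)
  have e2: "x ** (cadj (x - y) ** y) = x ** cadj x ** y - x ** cadj y ** y"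
    by (simp only: cadj_diff mm_diff_r mm_diff_l matrix_mul_assoc)
  have e3: "(x - y) ** (cadj y ** y) = x ** cadj y ** y - y ** cadj y ** y"
    by (simp only: mm_diff_r matrix_mul_assoc)
  have e4: "A ** (x - y) = A ** x - A ** y" by (rule mm_diff_l)
  have e5: "(x ** cadj x - A) ** x - (y ** cadj y - A) ** y = x ** cadj x ** x - A ** x - (y ** cadj y ** y - A ** y)"
    by (simp only: mm_diff_r)
  show ?thesis unfolding e1 e2 e3 e4 e5 by (simp add: algebra_simps)
qed

lemma lin4: "(a::real) \<le> a' \<Longrightarrow> b \<le> b' \<Longrightarrow> c \<le> c' \<Longrightarrow> d \<le> d' \<Longrightarrow> n \<le> m + d \<Longrightarrow> m \<le> l + c \<Longrightarrow> l \<le> a + b \<Longrightarrow> 2*n \<le> 2*(a'+b'+c'+d')"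
proof -
  assume "(a::real) \<le> a'" "b \<le> b'" "c \<le> c'" "d \<le> d'" "n \<le> m + d" "m \<le> l + c" "l \<le> a + b"
  hence "n \<le> a'+b'+c'+d'" by linarith
  thus ?thesis by simp
qed

lemma grad_lip: fixes x y :: "complex^'p^'n"
  assumes "norm x \<le> R" "norm y \<le> R"
  shows "norm (grad A x - grad A y) \<le> 2 * (3 * R\<^sup>2 + norm A) * norm (x - y)"
proof -
  let ?d = "norm (x - y)"
  have R: "0 \<le> R" using assms(1) norm_ge_zero order_trans by blast
  have "grad A x - grad A y = 2 *\<^sub>R ((x ** cadj x - A) ** x - (y ** cadj y - A) ** y)"
    by (simp add: grad_def scaleR_diff_right)
  hence "norm (grad A x - grad A y) = 2 * norm ((x ** cadj x - A) ** x - (y ** cadj y - A) ** y)"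
    by simp
  also have "\<dots> = 2 * norm (x ** (cadj x ** (x - y)) + x ** (cadj (x - y) ** y) + (x - y) ** (cadj y ** y) - A ** (x - y))"
    by (simp only: cubic_id)
  also have "\<dots> \<le> 2 * (norm x * (norm x * ?d) + norm x * (?d * norm y) + ?d * (norm y * norm y) + norm A * ?d)"
  proof -
    have "norm (x ** (cadj x ** (x - y))) \<le> norm x * (norm (cadj x) * ?d)"
      by (rule order_trans[OF norm_mmult mult_left_mono[OF norm_mmult norm_ge_zero]])
    hence "norm (x ** (cadj x ** (x - y))) \<le> norm x * (norm x * ?d)" by (simp only: cadj_norm)
    moreover have "norm (x ** (cadj (x - y) ** y)) \<le> norm x * (norm (cadj (x - y)) * norm y)"
      by (rule order_trans[OF norm_mmult mult_left_mono[OF norm_mmult norm_ge_zero]])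
    hence "norm (x ** (cadj (x - y) ** y)) \<le> norm x * (?d * norm y)" by (simp only: cadj_norm)
    moreover have "norm ((x - y) ** (cadj y ** y)) \<le> ?d * (norm (cadj y) * norm y)"
      by (rule order_trans[OF norm_mmult mult_left_mono[OF norm_mmult norm_ge_zero]])
    hence "norm ((x - y) ** (cadj y ** y)) \<le> ?d * (norm y * norm y)" by (simp only: cadj_norm)
    moreover have "norm (A ** (x - y)) \<le> norm A * ?d" by (rule norm_mmult)
    moreover have "norm (x ** (cadj x ** (x - y)) + x ** (cadj (x - y) ** y) + (x - y) ** (cadj y ** y) - A ** (x - y))
      \<le> norm (x ** (cadj x ** (x - y)) + x ** (cadj (x - y) ** y) + (x - y) ** (cadj y ** y)) + norm (A ** (x - y))"
      by (rule norm_triangle_ineq4)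
    moreover have "norm (x ** (cadj x ** (x - y)) + x ** (cadj (x - y) ** y) + (x - y) ** (cadj y ** y))
      \<le> norm (x ** (cadj x ** (x - y)) + x ** (cadj (x - y) ** y)) + norm ((x - y) ** (cadj y ** y))"
      by (rule norm_triangle_ineq)
    moreover have "norm (x ** (cadj x ** (x - y)) + x ** (cadj (x - y) ** y))
      \<le> norm (x ** (cadj x ** (x - y))) + norm (x ** (cadj (x - y) ** y))"
      by (rule norm_triangle_ineq)
    ultimately show ?thesis by (rule lin4)
  qed
  also have "\<dots> \<le> 2 * (3 * R\<^sup>2 + norm A) * ?d"
  proof -
    have "norm x * norm x \<le> R\<^sup>2" "norm x * norm y \<le> R\<^sup>2" "norm y * norm y \<le> R\<^sup>2"
      using assms R by (auto simp: power2_eq_square intro!: mult_mono)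
    hence "norm x * norm x * ?d \<le> R\<^sup>2 * ?d" "norm x * norm y * ?d \<le> R\<^sup>2 * ?d" "norm y * norm y * ?d \<le> R\<^sup>2 * ?d"
      by (auto intro: mult_right_mono)
    thus ?thesis by (simp add: algebra_simps)
  qed
  finally show ?thesis .
qed

lemma inner_mat1: "inner (mat 1) (M::complex^'n^'n) = (\<Sum>i\<in>UNIV. Re (M$i$i))"
proof -
  have "\<And>i j. inner ((mat 1::complex^'n^'n)$i$j) (M$i$j) = (if i = j then Re (M$i$i) else 0)"
    by (auto simp: mat_def inner_complex_def)
  then show ?thesis by (simp add: inner_vec_def)
qed

lemma cmod_sq': "cmod z * cmod z = Re z * Re z + Im z * Im z"
  by (metis cmod_power2 power2_eq_square)

lemma norm_sq_trace: "(norm (x::complex^'p^'n))\<^sup>2 = inner (mat 1) (x ** cadj x)"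
  unfolding inner_mat1 norm_sq_mat
  by (simp add: matrix_matrix_mult_def cadj_def Re_sum complex_mult_cnj cmod_power2 power2_eq_square cmod_sq')

lemma cost_bound: fixes x :: "complex^'p^'n"
  assumes "cost A x \<le> F"
  shows "norm x \<le> sqrt (norm (mat 1 :: complex^'n^'n) * (sqrt (2*F) + norm A))"
proof -
  have c: "cost A x = (norm (x ** cadj x - A))\<^sup>2 / 2" by (simp add: cost_def frob_norm_eq)
  have "norm (x ** cadj x - A) = sqrt ((norm (x ** cadj x - A))\<^sup>2)" by simp
  also have "\<dots> \<le> sqrt (2*F)" using assms c by (intro real_sqrt_le_mono) simp
  finally have h: "norm (x ** cadj x - A) \<le> sqrt (2*F)" .
  have "norm (x ** cadj x) \<le> norm (x ** cadj x - A) + norm A" using norm_triangle_sub[of "x ** cadj x" A] by simp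
  hence h2: "norm (x ** cadj x) \<le> sqrt (2*F) + norm A" using h by simp
  have "(norm x)\<^sup>2 \<le> norm (mat 1 :: complex^'n^'n) * norm (x ** cadj x)"
    unfolding norm_sq_trace by (rule norm_cauchy_schwarz)
  also have "\<dots> \<le> norm (mat 1 :: complex^'n^'n) * (sqrt (2*F) + norm A)"
    using h2 by (simp add: mult_left_mono)
  finally show ?thesis by (rule real_le_rsqrt)
qed

lemma desc_aux:
  fixes G G' s w T c2 :: real
  assumes "0<G" "0<G'" "\<bar>s\<bar> \<le> T*G" "\<bar>w\<bar> \<le> c2*\<bar>s\<bar>" "0 \<le> c2" "T*(1-c2) = 1"
  shows "\<bar>-G' + (G'/G)*w\<bar> \<le> T*G' \<and> -G' + (G'/G)*w \<le> -(1 - c2*T)*G'"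
proof -
  have q: "0 \<le> G'/G" using assms by simp
  have "\<bar>(G'/G)*w\<bar> = (G'/G)*\<bar>w\<bar>" by (simp only: abs_mult abs_of_nonneg[OF q])
  also have "\<dots> \<le> (G'/G)*(c2*(T*G))"
    using assms q by (intro mult_left_mono) (auto intro: order_trans mult_left_mono)
  also have "\<dots> = c2*T*G'" using assms by (simp add: field_simps)
  finally have r: "\<bar>(G'/G)*w\<bar> \<le> c2*T*G'" .
  have "(T*(1-c2))*G' = G'" using assms by simp
  hence e: "T*G' = G' + c2*T*G'" by (simp add: algebra_simps)
  have e2: "-(1 - c2*T)*G' = -G' + c2*T*G'" by (simp add: algebra_simps)
  have r1: "-(c2*T*G') \<le> (G'/G)*w" "(G'/G)*w \<le> c2*T*G'" using abs_le_D1[OF r] abs_le_D2[OF r] by linarith+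
  show ?thesis unfolding e2 abs_le_iff using r1 e assms(2) by linarith
qed

lemma eta_aux:
  fixes G G' s w T c2 E K \<Gamma> :: real
  assumes "0<G" "0<\<Gamma>" "\<Gamma> \<le> G'" "\<bar>w\<bar> \<le> c2*\<bar>s\<bar>" "\<bar>s\<bar> \<le> T*G" "0\<le>c2" "E \<le> K*G^2" "0 \<le> T"
  shows "G' - 2*((G'/G)*w) + (G'/G)^2*E \<le> (1+2*c2*T)/\<Gamma>*G'^2 + K*G'^2"
proof -
  have G': "0 < G'" using assms by linarith
  have q: "0 \<le> G'/G" using assms G' by simp
  have "\<bar>(G'/G)*w\<bar> = (G'/G)*\<bar>w\<bar>" by (simp only: abs_mult abs_of_nonneg[OF q])
  also have "\<dots> \<le> (G'/G)*(c2*(T*G))"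
    using assms q by (intro mult_left_mono) (auto intro: order_trans mult_left_mono)
  also have "\<dots> = c2*T*G'" using assms by (simp add: field_simps)
  finally have r: "\<bar>(G'/G)*w\<bar> \<le> c2*T*G'" .
  have r1: "-(c2*T*G') \<le> (G'/G)*w" using abs_le_D2[OF r] by linarith
  have "(1+2*c2*T)*G' = G' + 2*(c2*T*G')" by (simp add: algebra_simps)
  hence a: "G' - 2*((G'/G)*w) \<le> (1+2*c2*T)*G'" using r1 by linarith
  have "G' \<le> G'^2/\<Gamma>" using assms G' by (simp add: field_simps power2_eq_square mult_right_mono)
  hence "(1+2*c2*T)*G' \<le> (1+2*c2*T)*(G'^2/\<Gamma>)" using assms by (intro mult_left_mono) auto
  hence a2: "G' - 2*((G'/G)*w) \<le> (1+2*c2*T)/\<Gamma>*G'^2" using a by simp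
  have "(G'/G)^2*E \<le> (G'/G)^2*(K*G^2)" using assms by (intro mult_left_mono) auto
  also have "\<dots> = K*G'^2" using assms by (simp add: field_simps)
  finally show ?thesis using a2 by linarith
qed

lemma norm_expand: fixes a b :: "'a::real_inner"
  shows "(norm (- a + c *\<^sub>R b))\<^sup>2 = (norm a)\<^sup>2 - 2 * (c * inner a b) + c\<^sup>2 * (norm b)\<^sup>2"
  unfolding power2_norm_eq_inner
  by (simp add: inner_add_left inner_add_right inner_commute power2_eq_square algebra_simps)

lemma frac_aux: fixes G g C d r :: real
  assumes "G \<noteq> 0" "g\<noteq>0" "C \<noteq> 0" "r+1 \<noteq> 0" shows "d^2*g/C*(1/(r+1)) = (d*G)^2/(C*(r+1)/g*G^2)"
proof -
  have "(d*G)^2/(C*(r+1)/g*G^2) = (d^2*G^2)/((C*(r+1)/g)*G^2)" by (simp add: power_mult_distrib)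
  also have "\<dots> = d^2/(C*(r+1)/g)" using assms by (simp add: nonzero_mult_divide_mult_cancel_right)
  also have "\<dots> = d^2*g/C*(1/(r+1))" using assms by simp
  finally show ?thesis ..
qed

theorem theorem4p5:
  fixes A :: "complex^'n^'n"
    and x eta :: "nat \<Rightarrow> complex^'p^'n"
    and alpha :: "nat \<Rightarrow> real"
    and c1 c2 :: real
  assumes herm: "cadj A = A"
    and c: "0 < c1" "c1 < c2" "c2 < 1/2"
    and eta0: "eta 0 = - grad A (x 0)"
    and xstep: "\<And>k. x (Suc k) = x k + alpha k *\<^sub>R eta k"
    and etastep: "\<And>k. eta (Suc k) = - grad A (x (Suc k))
        + ((frob_norm (grad A (x (Suc k))))\<^sup>2 / (frob_norm (grad A (x k)))\<^sup>2) *\<^sub>R eta k"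
    and alpha_pos: "\<And>k. 0 < alpha k"
    and wolfe1: "\<And>k. cost A (x k + alpha k *\<^sub>R eta k)
        \<le> cost A (x k) + c1 * alpha k * frob_inner (grad A (x k)) (eta k)"
    and wolfe2: "\<And>k. \<bar>frob_inner (grad A (x k + alpha k *\<^sub>R eta k)) (eta k)\<bar>
        \<le> c2 * \<bar>frob_inner (grad A (x k)) (eta k)\<bar>"
    and fullrank: "\<And>k. rank (x k) = CARD('p)"
    and nonstat: "\<And>k. grad A (x k) \<noteq> 0"
  shows "liminf (\<lambda>k. ereal (frob_norm (grad A (x k)))) = 0"
proof -
  define g where "g k = grad A (x k)" for k
  define s where "s k = inner (g k) (eta k)" for k
  define G where "G k = (norm (g k))\<^sup>2" for k
  define f where "f k = cost A (x k)" for k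
  define T where "T = 1/(1-c2)"
  define \<delta> where "\<delta> = 1 - c2*T"
  define C where "C = 1 + 2*c2*T"
  have c2p: "0 \<le> c2" "c2 < 1" using c by auto
  have T1: "T*(1-c2) = 1" using c by (simp add: T_def)
  have Tge: "1 \<le> T" using c by (simp add: T_def field_simps)
  have dpos: "0 < \<delta>" using c by (simp add: \<delta>_def T_def field_simps)
  have dle: "\<delta> \<le> 1" using c2p Tge by (simp add: \<delta>_def)
  have Cge: "1 \<le> C" using c2p Tge by (simp add: C_def)
  have Gpos: "0 < G k" for k using nonstat[of k] by (simp add: G_def g_def)
  have xs: "x k + alpha k *\<^sub>R eta k = x (Suc k)" for k by (simp add: xstep)
  have w1: "f (Suc k) \<le> f k + c1 * alpha k * s k" for k
    using wolfe1[of k] by (simp add: xs f_def s_def g_def frob_inner_eq)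
  have w2: "\<bar>inner (g (Suc k)) (eta k)\<bar> \<le> c2 * \<bar>s k\<bar>" for k
    using wolfe2[of k] by (simp add: xs s_def g_def frob_inner_eq)
  have es: "eta (Suc k) = - g (Suc k) + (G (Suc k) / G k) *\<^sub>R eta k" for k
    using etastep[of k] by (simp add: g_def G_def frob_norm_eq)
  have srec: "s (Suc k) = - G (Suc k) + (G (Suc k) / G k) * inner (g (Suc k)) (eta k)" for k
    by (simp add: s_def es inner_add_right inner_diff_right G_def power2_norm_eq_inner)
  have desc: "\<bar>s k\<bar> \<le> T * G k \<and> s k \<le> - \<delta> * G k" for k
  proof (induction k)
    case 0
    have "s 0 = - G 0" by (simp add: s_def eta0 g_def G_def power2_norm_eq_inner)
    moreover have "1 * G 0 \<le> T * G 0" using Tge Gpos[of 0] by (intro mult_right_mono) auto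
    moreover have "\<delta> * G 0 \<le> 1 * G 0" using dle Gpos[of 0] by (intro mult_right_mono) auto
    ultimately show ?case using Gpos[of 0] by simp
  next
    case (Suc k)
    show ?case unfolding srec \<delta>_def
      using desc_aux[OF Gpos[of k] Gpos[of "Suc k"] conjunct1[OF Suc] w2[of k] c2p(1) T1] by simp
  qed
  have sneg: "s k < 0" for k
  proof -
    have "0 < \<delta> * G k" by (rule mult_pos_pos[OF dpos Gpos])
    then show ?thesis using desc[of k] by linarith
  qed
  have fdec: "f (Suc k) \<le> f k" for k
  proof -
    have "c1 * alpha k * s k < 0" by (intro mult_pos_neg mult_pos_pos c(1) alpha_pos sneg)
    then show ?thesis using w1[of k] by linarith
  qed
  have fle: "f k \<le> f 0" for k
  proof (induction k)
    case (Suc k) then show ?case using fdec[of k] by linarith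
  qed simp
  define R where "R = sqrt (norm (mat 1 :: complex^'n^'n) * (sqrt (2*f 0) + norm A))"
  have xR: "norm (x k) \<le> R" for k unfolding R_def
    by (rule cost_bound) (simp add: fle[of k, unfolded f_def] f_def)
  define L where "L = 2 * (3 * R\<^sup>2 + norm A) + 1"
  have Lpos: "0 < L"
  proof -
    have "0 \<le> 2 * (3 * R\<^sup>2 + norm A)" by simp
    then show ?thesis unfolding L_def by linarith
  qed
  have lip: "norm (g (Suc k) - g k) \<le> L * (alpha k * norm (eta k))" for k
  proof -
    have "norm (g (Suc k) - g k) \<le> 2 * (3 * R\<^sup>2 + norm A) * norm (x (Suc k) - x k)"
      unfolding g_def by (rule grad_lip[OF xR xR])
    also have "norm (x (Suc k) - x k) = alpha k * norm (eta k)"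
      using alpha_pos[of k] by (simp add: xstep)
    finally have h: "norm (g (Suc k) - g k) \<le> 2 * (3 * R\<^sup>2 + norm A) * (alpha k * norm (eta k))" .
    have "0 \<le> alpha k * norm (eta k)" using alpha_pos[of k] by simp
    hence "2 * (3 * R\<^sup>2 + norm A) * (alpha k * norm (eta k)) \<le> L * (alpha k * norm (eta k))"
      unfolding L_def by (intro mult_right_mono) auto
    then show ?thesis using h by linarith
  qed
  have etanz: "eta k \<noteq> 0" for k using sneg[of k] by (auto simp: s_def)
  define z where "z k = (s k)\<^sup>2 / (norm (eta k))\<^sup>2" for k
  define K where "K = L / (c1 * (1 - c2))"
  have zle: "z k \<le> K * (f k - f (Suc k))" for k
  proof -
    have "(1 - c2) * \<bar>s k\<bar> \<le> inner (g (Suc k)) (eta k) - s k"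
      using w2[of k] sneg[of k] by (simp add: algebra_simps)
    also have "\<dots> = inner (g (Suc k) - g k) (eta k)" by (simp add: s_def inner_diff_left)
    also have "\<dots> \<le> norm (g (Suc k) - g k) * norm (eta k)" by (rule norm_cauchy_schwarz)
    also have "\<dots> \<le> L * (alpha k * norm (eta k)) * norm (eta k)"
      by (rule mult_right_mono[OF lip]) simp
    finally have a: "(1 - c2) * \<bar>s k\<bar> \<le> L * alpha k * (norm (eta k))\<^sup>2"
      by (simp add: power2_eq_square mult_ac)
    have np: "0 < (norm (eta k))\<^sup>2" using etanz[of k] by simp
    have "z k = \<bar>s k\<bar> * \<bar>s k\<bar> / (norm (eta k))\<^sup>2" by (simp add: z_def power2_eq_square abs_mult_self_eq)
    also have "\<dots> \<le> \<bar>s k\<bar> * (L * alpha k / (1 - c2))"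
    proof -
      have "\<bar>s k\<bar> \<le> L * alpha k * (norm (eta k))\<^sup>2 / (1 - c2)" using a c2p by (simp add: field_simps)
      hence "\<bar>s k\<bar> * \<bar>s k\<bar> \<le> \<bar>s k\<bar> * (L * alpha k * (norm (eta k))\<^sup>2 / (1 - c2))"
        by (rule mult_left_mono) simp
      thus ?thesis using np by (simp add: field_simps)
    qed
    also have "\<dots> = K * (c1 * alpha k * (- s k))"
      using sneg[of k] c c2p by (simp add: K_def field_simps)
    also have "\<dots> \<le> K * (f k - f (Suc k))"
      using w1[of k] Lpos c c2p by (intro mult_left_mono) (auto simp: K_def)
    finally show ?thesis .
  qed
  have fnn: "0 \<le> f k" for k unfolding f_def cost_def by (rule mult_nonneg_nonneg) auto
  have Kpos: "0 < K" unfolding K_def using Lpos c c2p by (intro divide_pos_pos mult_pos_pos) auto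
  have zsum: "summable z"
  proof (rule summableI_nonneg_bounded)
    show "0 \<le> z n" for n unfolding z_def by (intro divide_nonneg_nonneg) auto
    show "(\<Sum>i<n. z i) \<le> K * f 0" for n
    proof -
      have "(\<Sum>i<n. z i) \<le> (\<Sum>i<n. K * (f i - f (Suc i)))" by (intro sum_mono zle)
      also have "\<dots> = K * (f 0 - f n)"
        by (simp only: sum_distrib_left[symmetric] sum_lessThan_telescope')
      also have "\<dots> \<le> K * f 0" using Kpos fnn[of n] by (intro mult_left_mono) auto
      finally show ?thesis .
    qed
  qed
  have core: False if gam: "0 < \<Gamma>" "\<And>k. \<Gamma> \<le> G k" for \<Gamma>
  proof -
    have eb: "(norm (eta k))\<^sup>2 \<le> C * (real k + 1) / \<Gamma> * (G k)\<^sup>2" for k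
    proof (induction k)
      case 0
      have "(norm (eta 0))\<^sup>2 = G 0" by (simp add: eta0 G_def g_def)
      also have "\<dots> \<le> C * (real 0 + 1) / \<Gamma> * (G 0)\<^sup>2"
      proof -
        have "G 0 \<le> (G 0)\<^sup>2 / \<Gamma>" using gam Gpos[of 0]
          by (simp add: field_simps power2_eq_square mult_right_mono)
        also have "\<dots> = 1 * ((G 0)\<^sup>2 / \<Gamma>)" by simp
        also have "\<dots> \<le> C * ((G 0)\<^sup>2 / \<Gamma>)" using Cge gam by (intro mult_right_mono) auto
        finally show ?thesis by simp
      qed
      finally show ?case .
    next
      case (Suc k)
      have "(norm (eta (Suc k)))\<^sup>2 = G (Suc k) - 2 * ((G (Suc k) / G k) * inner (g (Suc k)) (eta k))
           + (G (Suc k) / G k)\<^sup>2 * (norm (eta k))\<^sup>2"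
        unfolding es norm_expand G_def by simp
      also have "\<dots> \<le> (1+2*c2*T)/\<Gamma>*(G (Suc k))^2 + (C * (real k + 1) / \<Gamma>)*(G (Suc k))^2"
        by (rule eta_aux[OF Gpos[of k] gam(1) gam(2)[of "Suc k"] w2[of k] conjunct1[OF desc[of k]] c2p(1) Suc])
           (use Tge in simp)
      also have "\<dots> = C * (real (Suc k) + 1) / \<Gamma> * (G (Suc k))\<^sup>2"
        unfolding C_def[symmetric] by (simp add: add_divide_distrib[symmetric] algebra_simps)
      finally show ?case .
    qed
    define D where "D = \<delta>^2 * \<Gamma> / C"
    have Dpos: "0 < D" using dpos gam Cge by (simp add: D_def)
    have zlow: "D * (1 / (real k + 1)) \<le> z k" for k
    proof -
      have Gk: "0 < G k" by (rule Gpos)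
      have "\<delta> * G k \<le> \<bar>s k\<bar>" using desc[of k] by linarith
      moreover have "0 \<le> \<delta> * G k" using dpos Gk by simp
      ultimately have "(\<delta> * G k)\<^sup>2 \<le> \<bar>s k\<bar>\<^sup>2" by (rule power_mono)
      hence s2: "(\<delta> * G k)\<^sup>2 \<le> (s k)\<^sup>2" by (simp only: power2_abs)
      have np: "0 < (norm (eta k))\<^sup>2" using etanz[of k] by simp
      have "D * (1 / (real k + 1)) = (\<delta> * G k)\<^sup>2 / (C * (real k + 1) / \<Gamma> * (G k)\<^sup>2)"
        unfolding D_def using Gk gam Cge by (intro frac_aux) auto
      also have "\<dots> \<le> (s k)\<^sup>2 / (C * (real k + 1) / \<Gamma> * (G k)\<^sup>2)"
        using s2 Gk gam Cge by (intro divide_right_mono) auto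
      also have "\<dots> \<le> (s k)\<^sup>2 / (norm (eta k))\<^sup>2"
      proof -
        have pos1: "0 < C * (real k + 1) / \<Gamma> * (G k)\<^sup>2"
          using Cge gam Gk by (intro mult_pos_pos divide_pos_pos) auto
        show ?thesis by (rule divide_left_mono[OF eb[of k] zero_le_power2 mult_pos_pos[OF pos1 np]])
      qed
      finally show ?thesis by (simp add: z_def)
    qed
    have "summable (\<lambda>k. 1 / (real k + 1))"
    proof (rule summable_comparison_test)
      show "summable (\<lambda>k. z k / D)" using zsum by (simp add: summable_divide)
      have "norm (1 / (real n + 1)) \<le> z n / D" for n
      proof -
        have "norm (1 / (real n + 1)) = 1 / (real n + 1)" by simp
        also have "\<dots> \<le> z n / D" unfolding pos_le_divide_eq[OF Dpos]
          using zlow[of n] by (simp only: mult.commute)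
        finally show ?thesis .
      qed
      thus "\<exists>N. \<forall>n\<ge>N. norm (1 / (real n + 1)) \<le> z n / D" by blast
    qed
    hence "summable (\<lambda>k. inverse (of_nat (Suc k)) :: real)"
      by (simp add: inverse_eq_divide add.commute)
    hence "summable (\<lambda>k. inverse (of_nat k) :: real)" by (subst (asm) summable_Suc_iff)
    thus False using not_summable_harmonic by blast
  qed
  let ?X = "\<lambda>k. ereal (frob_norm (grad A (x k)))"
  have X: "?X k = ereal (norm (g k))" for k by (simp add: g_def frob_norm_eq)
  have ge0: "0 \<le> liminf ?X" by (rule Liminf_bounded) (simp add: frob_norm_eq)
  have le0: "liminf ?X \<le> 0"
  proof (rule ccontr)
    assume "\<not> liminf ?X \<le> 0"
    hence "0 < liminf ?X" by simp
    then obtain e where e: "0 < ereal e" "ereal e < liminf ?X" using ereal_dense2 by blast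
    have h: "\<forall>y<liminf ?X. eventually (\<lambda>k. y < ?X k) sequentially"
      using le_Liminf_iff[of "liminf ?X" sequentially ?X] by simp
    have "eventually (\<lambda>k. ereal e < ?X k) sequentially" using h e(2) by blast
    then obtain N where N0: "\<And>k. k \<ge> N \<Longrightarrow> ereal e < ?X k"
      unfolding eventually_sequentially by blast
    have N: "e < norm (g k)" if "k \<ge> N" for k using N0[OF that] unfolding X by simp
    define \<gamma> where "\<gamma> = Min (insert e ((\<lambda>k. norm (g k)) ` {..<N}))"
    have gn: "0 < norm (g k)" for k using nonstat[of k] by (simp add: g_def)
    have gpos: "0 < \<gamma>" unfolding \<gamma>_def
      by (subst Min_gr_iff) (use e(1) gn in auto)
    have gle: "\<gamma> \<le> norm (g k)" for k
    proof (cases "k < N")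
      case True thus ?thesis unfolding \<gamma>_def by (intro Min_le) auto
    next
      case False
      hence "\<gamma> \<le> e" unfolding \<gamma>_def by (intro Min_le) auto
      thus ?thesis using N[of k] False by simp
    qed
    show False
    proof (rule core)
      show "0 < \<gamma>\<^sup>2" using gpos by simp
      show "\<gamma>\<^sup>2 \<le> G k" for k unfolding G_def using gle[of k] gpos by (simp add: power_mono)
    qed
  qed
  show ?thesis using ge0 le0 by simp
qed

end
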